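(* Let $n\geq 1$. For every real $r\geq 2$, the Vietoris--Rips complex $\mathrm{VR}(\mathbb{Z}^n;r)$ is simply connected.
   Context: $\mathbb{Z}^n$ is equipped with the Manhattan metric $d(x,y)=\sum_{i=1}^n |x_i-y_i|$. For a metric space $X$ and $r\geq 0$, $\mathrm{VR}(X;r)$ is the simplicial complex with vertex set $X$ whose simplices are the finite subsets of $X$ of diameter at most $r$. *)

theory Defs
  imports "HOL-Analysis.Analysis"
begin

definition manhattan :: "int ^ 'n \<Rightarrow> int ^ 'n \<Rightarrow> real" where
  "manhattan x y = (\<Sum>i\<in>UNIV. real_of_int \<bar>x $ i - y $ i\<bar>)"

definition VR_complex :: "('a \<Rightarrow> 'a \<Rightarrow> real) \<Rightarrow> 'a set \<Rightarrow> real \<Rightarrow> 'a set set" where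
  "VR_complex d X r = {\<sigma>. \<sigma> \<subseteq> X \<and> finite \<sigma> \<and> \<sigma> \<noteq> {} \<and> (\<forall>x\<in>\<sigma>. \<forall>y\<in>\<sigma>. d x y \<le> r)}"

text \<open>Closed geometric simplex spanned by a finite vertex set, in barycentric coordinates.\<close>
definition closed_simplex :: "'a set \<Rightarrow> ('a \<Rightarrow> real) set" where
  "closed_simplex \<sigma> = {\<alpha>. (\<forall>v. 0 \<le> \<alpha> v) \<and> (\<forall>v. v \<notin> \<sigma> \<longrightarrow> \<alpha> v = 0) \<and> sum \<alpha> \<sigma> = 1}"

text \<open>Geometric realization of an abstract simplicial complex K (given by its set of
  simplices), with the usual weak (coherent) topology: a set is open iff its
  intersection with every closed simplex is open in that simplex (Euclidean topology).\<close>
definition realization_carrier :: "'a set set \<Rightarrow> ('a \<Rightarrow> real) set" where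
  "realization_carrier K = (\<Union>\<sigma>\<in>K. closed_simplex \<sigma>)"

definition realization :: "'a set set \<Rightarrow> ('a \<Rightarrow> real) topology" where
  "realization K = topology (\<lambda>U. U \<subseteq> realization_carrier K \<and>
      (\<forall>\<sigma>\<in>K. openin (top_of_set (closed_simplex \<sigma>)) (U \<inter> closed_simplex \<sigma>)))"

lemma istopology_realization:
  "istopology (\<lambda>U. U \<subseteq> realization_carrier K \<and>
      (\<forall>\<sigma>\<in>K. openin (top_of_set (closed_simplex \<sigma>)) (U \<inter> closed_simplex \<sigma>)))"
  unfolding istopology_def
proof (rule conjI; intro allI impI)
  fix S T assume S: "S \<subseteq> realization_carrier K \<and> (\<forall>\<sigma>\<in>K. openin (top_of_set (closed_simplex \<sigma>)) (S \<inter> closed_simplex \<sigma>))"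
    and T: "T \<subseteq> realization_carrier K \<and> (\<forall>\<sigma>\<in>K. openin (top_of_set (closed_simplex \<sigma>)) (T \<inter> closed_simplex \<sigma>))"
  show "S \<inter> T \<subseteq> realization_carrier K \<and> (\<forall>\<sigma>\<in>K. openin (top_of_set (closed_simplex \<sigma>)) (S \<inter> T \<inter> closed_simplex \<sigma>))"
  proof (intro conjI ballI)
    show "S \<inter> T \<subseteq> realization_carrier K" using S by blast
  next
    fix \<sigma> assume "\<sigma> \<in> K"
    then have "openin (top_of_set (closed_simplex \<sigma>)) ((S \<inter> closed_simplex \<sigma>) \<inter> (T \<inter> closed_simplex \<sigma>))"
      using S T by blast
    moreover have "(S \<inter> closed_simplex \<sigma>) \<inter> (T \<inter> closed_simplex \<sigma>) = S \<inter> T \<inter> closed_simplex \<sigma>" by blast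
    ultimately show "openin (top_of_set (closed_simplex \<sigma>)) (S \<inter> T \<inter> closed_simplex \<sigma>)" by simp
  qed
next
  fix \<K> assume H: "\<forall>U\<in>\<K>. U \<subseteq> realization_carrier K \<and> (\<forall>\<sigma>\<in>K. openin (top_of_set (closed_simplex \<sigma>)) (U \<inter> closed_simplex \<sigma>))"
  show "\<Union>\<K> \<subseteq> realization_carrier K \<and> (\<forall>\<sigma>\<in>K. openin (top_of_set (closed_simplex \<sigma>)) (\<Union>\<K> \<inter> closed_simplex \<sigma>))"
  proof (intro conjI ballI)
    show "\<Union>\<K> \<subseteq> realization_carrier K" using H by blast
  next
    fix \<sigma> assume "\<sigma> \<in> K"
    then have "openin (top_of_set (closed_simplex \<sigma>)) (\<Union>U\<in>\<K>. U \<inter> closed_simplex \<sigma>)"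
      using H by (intro openin_Union) auto
    moreover have "(\<Union>U\<in>\<K>. U \<inter> closed_simplex \<sigma>) = \<Union>\<K> \<inter> closed_simplex \<sigma>" by blast
    ultimately show "openin (top_of_set (closed_simplex \<sigma>)) (\<Union>\<K> \<inter> closed_simplex \<sigma>)" by simp
  qed
qed

definition simply_connected_space :: "'a topology \<Rightarrow> bool" where
  "simply_connected_space X \<longleftrightarrow> path_connected_space X \<and>
     (\<forall>p. pathin X p \<and> p 1 = p 0 \<longrightarrow>
        homotopic_with (\<lambda>q. q 1 = q 0) (top_of_set {0..1}) X p (\<lambda>t. p 0))"

end

theory Submission
  imports Defs
begin

lemma openin_realization:
  "openin (realization K) U \<longleftrightarrow> U \<subseteq> realization_carrier K \<and>
      (\<forall>\<sigma>\<in>K. openin (top_of_set (closed_simplex \<sigma>)) (U \<inter> closed_simplex \<sigma>))"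
  unfolding realization_def using istopology_realization[of K] by simp

lemma simplex_sub_carrier: "\<sigma> \<in> K \<Longrightarrow> closed_simplex \<sigma> \<subseteq> realization_carrier K"
  unfolding realization_carrier_def by blast

lemma topspace_realization: "topspace (realization K) = realization_carrier K"
proof
  show "topspace (realization K) \<subseteq> realization_carrier K"
    by (metis openin_realization openin_topspace)
  have "openin (realization K) (realization_carrier K)"
    unfolding openin_realization
  proof (intro conjI ballI)
    fix \<sigma> assume "\<sigma> \<in> K"
    then have "realization_carrier K \<inter> closed_simplex \<sigma> = closed_simplex \<sigma>"
      using simplex_sub_carrier by blast
    then show "openin (top_of_set (closed_simplex \<sigma>)) (realization_carrier K \<inter> closed_simplex \<sigma>)"
      by simp
  qed simp
  then show "realization_carrier K \<subseteq> topspace (realization K)"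
    by (simp add: openin_subset)
qed

lemma closed_closed_simplex:
  assumes "finite \<sigma>"
  shows "closed (closed_simplex \<sigma>)"
proof -
  have eq: "closed_simplex \<sigma> = (\<Inter>v. {\<alpha>::'a\<Rightarrow>real. 0 \<le> \<alpha> v}) \<inter> (\<Inter>v\<in>-\<sigma>. {\<alpha>. \<alpha> v = 0}) \<inter> {\<alpha>. sum \<alpha> \<sigma> = 1}"
    unfolding closed_simplex_def by auto
  have c1: "closed {\<alpha>::'a\<Rightarrow>real. 0 \<le> \<alpha> v}" for v
    by (intro closed_Collect_le continuous_intros) simp
  have c2: "closed {\<alpha>::'a\<Rightarrow>real. \<alpha> v = 0}" for v
    by (intro closed_Collect_eq continuous_intros) simp
  have c3: "closed {\<alpha>::'a\<Rightarrow>real. sum \<alpha> \<sigma> = 1}"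
    by (intro closed_Collect_eq continuous_intros continuous_on_sum) simp
  show ?thesis unfolding eq
    using c1 c2 c3 by (intro closed_Int closed_INT) auto
qed

lemma continuous_map_into_realization:
  assumes cont: "continuous_map T euclidean h" and fin: "finite B"
    and fK: "\<forall>\<sigma>\<in>K. finite \<sigma>"
    and inS: "\<And>x. x \<in> topspace T \<Longrightarrow> \<exists>\<sigma>\<in>K. \<sigma> \<subseteq> B \<and> h x \<in> closed_simplex \<sigma>"
  shows "continuous_map T (realization K) h"
  unfolding continuous_map_def
proof (intro conjI allI impI)
  show "h \<in> topspace T \<rightarrow> topspace (realization K)"
    using inS simplex_sub_carrier unfolding topspace_realization by blast
next
  fix U assume U: "openin (realization K) U"
  define KB where "KB = {\<sigma>\<in>K. \<sigma> \<subseteq> B}"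
  have finKB: "finite KB" using fin unfolding KB_def
    by (intro finite_subset[OF _ finite_Pow_iff[THEN iffD2, OF fin]]) auto
  define Z where "Z = (\<Union>\<sigma>\<in>KB. closed_simplex \<sigma> - U)"
  have "closed (closed_simplex \<sigma> - U)" if "\<sigma> \<in> KB" for \<sigma>
  proof -
    have sK: "\<sigma> \<in> K" using that KB_def by auto
    have "openin (top_of_set (closed_simplex \<sigma>)) (U \<inter> closed_simplex \<sigma>)"
      using U sK openin_realization by blast
    then have "closedin (top_of_set (closed_simplex \<sigma>)) (closed_simplex \<sigma> - (U \<inter> closed_simplex \<sigma>))"
      using closedin_diff[OF closedin_topspace[of "top_of_set (closed_simplex \<sigma>)"]] by simp
    moreover have "closed_simplex \<sigma> - (U \<inter> closed_simplex \<sigma>) = closed_simplex \<sigma> - U" by blast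
    ultimately show ?thesis using closedin_closed_trans closed_closed_simplex fK sK by metis
  qed
  then have cZ: "closed Z" unfolding Z_def using finKB by blast
  have "{x \<in> topspace T. h x \<in> U} = topspace T - {x \<in> topspace T. h x \<in> Z}"
  proof -
    have "h x \<in> U \<longleftrightarrow> h x \<notin> Z" if "x \<in> topspace T" for x
      using inS[OF that] unfolding Z_def KB_def by blast
    then show ?thesis by auto
  qed
  moreover have "closedin T {x \<in> topspace T. h x \<in> Z}"
    using closedin_continuous_map_preimage[OF cont] cZ closed_closedin by blast
  ultimately show "openin T {x \<in> topspace T. h x \<in> U}"
    by (simp only:) (rule openin_diff[OF openin_topspace])
qed


lemma continuous_map_from_realization:
  assumes "continuous_map T (realization (K::'a set set)) p"
  shows "continuous_map T euclidean p"
  unfolding continuous_map_def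
proof (intro conjI allI impI)
  show "p \<in> topspace T \<rightarrow> topspace euclidean" by simp
next
  fix U :: "('a \<Rightarrow> real) set" assume "openin euclidean U"
  then have oU: "open U" by simp
  have "openin (realization K) (U \<inter> realization_carrier K)"
    unfolding openin_realization
  proof (intro conjI ballI)
    fix \<sigma> assume "\<sigma> \<in> K"
    then have "U \<inter> realization_carrier K \<inter> closed_simplex \<sigma> = closed_simplex \<sigma> \<inter> U"
      using simplex_sub_carrier by blast
    then show "openin (top_of_set (closed_simplex \<sigma>)) (U \<inter> realization_carrier K \<inter> closed_simplex \<sigma>)"
      by (simp only:) (rule openin_open_Int[OF oU])
  qed simp
  then have "openin T {x \<in> topspace T. p x \<in> U \<inter> realization_carrier K}"
    by (rule openin_continuous_map_preimage[OF assms])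
  moreover have "{x \<in> topspace T. p x \<in> U \<inter> realization_carrier K} = {x \<in> topspace T. p x \<in> U}"
    using continuous_map_image_subset_topspace[OF assms] unfolding topspace_realization by blast
  ultimately show "openin T {x \<in> topspace T. p x \<in> U}" by simp
qed

definition comb :: "real \<Rightarrow> ('a \<Rightarrow> real) \<Rightarrow> ('a \<Rightarrow> real) \<Rightarrow> 'a \<Rightarrow> real" where
  "comb s \<alpha> \<beta> = (\<lambda>x. (1 - s) * \<alpha> x + s * \<beta> x)"

definition vtx :: "'a \<Rightarrow> 'a \<Rightarrow> real" where
  "vtx v = (\<lambda>x. if x = v then 1 else 0)"

lemma comb_0 [simp]: "comb 0 \<alpha> \<beta> = \<alpha>" and comb_1 [simp]: "comb 1 \<alpha> \<beta> = \<beta>"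
  by (auto simp: comb_def)

lemma comb_in_simplex:
  assumes "\<alpha> \<in> closed_simplex \<sigma>" "\<beta> \<in> closed_simplex \<sigma>" "0 \<le> s" "s \<le> 1"
  shows "comb s \<alpha> \<beta> \<in> closed_simplex \<sigma>"
proof -
  have "sum (comb s \<alpha> \<beta>) \<sigma> = (1 - s) * sum \<alpha> \<sigma> + s * sum \<beta> \<sigma>"
    unfolding comb_def by (simp add: sum.distrib sum_distrib_left)
  then show ?thesis using assms unfolding closed_simplex_def comb_def by auto
qed

lemma vtx_in_simplex: "finite \<tau> \<Longrightarrow> v \<in> \<tau> \<Longrightarrow> vtx v \<in> closed_simplex \<tau>"
  unfolding closed_simplex_def vtx_def by auto

lemma simplex_pos: "\<alpha> \<in> closed_simplex \<sigma> \<Longrightarrow> \<exists>v\<in>\<sigma>. 0 < \<alpha> v"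
proof (rule ccontr)
  assume a: "\<alpha> \<in> closed_simplex \<sigma>" and "\<not> (\<exists>v\<in>\<sigma>. 0 < \<alpha> v)"
  have "\<forall>v\<in>\<sigma>. \<alpha> v = 0"
  proof
    fix v assume "v \<in> \<sigma>"
    then have "\<not> 0 < \<alpha> v" using \<open>\<not> (\<exists>v\<in>\<sigma>. 0 < \<alpha> v)\<close> by blast
    moreover have "0 \<le> \<alpha> v" using a unfolding closed_simplex_def by blast
    ultimately show "\<alpha> v = 0" by simp
  qed
  then have "sum \<alpha> \<sigma> = 0" by simp
  then show False using a unfolding closed_simplex_def by simp
qed

lemma simplex_supp: "\<alpha> \<in> closed_simplex \<sigma> \<Longrightarrow> 0 < \<alpha> v \<Longrightarrow> v \<in> \<sigma>"
  unfolding closed_simplex_def by force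

lemma continuous_comb:
  assumes "continuous_on S f" "continuous_on S g" "continuous_on S s"
  shows "continuous_on S (\<lambda>z. comb (s z) (f z) (g z))"
  unfolding comb_def
proof (rule continuous_on_coordinatewise_then_product)
  fix x
  have fx: "continuous_on S (\<lambda>z. f z x)" by (rule continuous_on_product_then_coordinatewise[OF assms(1)])
  have gx: "continuous_on S (\<lambda>z. g z x)" by (rule continuous_on_product_then_coordinatewise[OF assms(2)])
  show "continuous_on S (\<lambda>z. (1 - s z) * f z x + s z * g z x)"
    by (intro continuous_intros fx gx assms(3))
qed

lemma SL_homotopic:
  fixes K :: "'a set set" and p q :: "real \<Rightarrow> 'a \<Rightarrow> real"
  assumes fK: "\<forall>\<sigma>\<in>K. finite \<sigma>" and cp: "continuous_on {0..1} p" and cq: "continuous_on {0..1} q"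
    and p1: "p 1 = p 0" and q1: "q 1 = q 0" and fB: "finite B"
    and H: "\<And>t. t \<in> {0..1} \<Longrightarrow> \<exists>\<sigma>\<in>K. \<sigma> \<subseteq> B \<and> p t \<in> closed_simplex \<sigma> \<and> q t \<in> closed_simplex \<sigma>"
  shows "homotopic_with (\<lambda>r. r 1 = r 0) (top_of_set {0..1}) (realization K) p q"
  unfolding homotopic_with_def
proof (intro exI conjI allI ballI)
  let ?h = "\<lambda>z::real\<times>real. comb (fst z) (p (snd z)) (q (snd z))"
  have c: "continuous_on ({0..1} \<times> {0..1}) ?h"
  proof (rule continuous_comb)
    show "continuous_on ({0..1} \<times> {0..1}) (\<lambda>z::real\<times>real. p (snd z))"
      by (rule continuous_on_compose2[OF cp continuous_on_snd[OF continuous_on_id]]) auto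
    show "continuous_on ({0..1} \<times> {0..1}) (\<lambda>z::real\<times>real. q (snd z))"
      by (rule continuous_on_compose2[OF cq continuous_on_snd[OF continuous_on_id]]) auto
    show "continuous_on ({0..1} \<times> {0..1}) (\<lambda>z::real\<times>real. fst z)"
      by (rule continuous_on_fst[OF continuous_on_id])
  qed
  show "continuous_map (prod_topology (top_of_set {0..1}) (top_of_set {0..1})) (realization K) ?h"
  proof (rule continuous_map_into_realization[OF _ fB fK])
    show "continuous_map (prod_topology (top_of_set {0..1}) (top_of_set {0..1})) euclidean ?h"
      using c by (simp only: prod_topology_subtopology_eu continuous_map_iff_continuous)
  next
    fix z assume "z \<in> topspace (prod_topology (top_of_set {0..1::real}) (top_of_set {0..1::real}))"
    then have z: "fst z \<in> {0..1}" "snd z \<in> {0..1}" by auto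
    obtain \<sigma> where s: "\<sigma> \<in> K" "\<sigma> \<subseteq> B" and ps: "p (snd z) \<in> closed_simplex \<sigma>" and qs: "q (snd z) \<in> closed_simplex \<sigma>"
      using H[OF z(2)] by blast
    have "?h z \<in> closed_simplex \<sigma>" using comb_in_simplex[OF ps qs] z by simp
    then show "\<exists>\<sigma>\<in>K. \<sigma> \<subseteq> B \<and> ?h z \<in> closed_simplex \<sigma>"
      using s by blast
  qed
  fix x show "?h (0, x) = p x" by simp
next
  fix x show "comb (fst (1, x)) (p (snd (1, x))) (q (snd (1::real, x))) = q x" by simp
next
  fix t :: real
  show "(\<lambda>x. comb (fst (t, x)) (p (snd (t, x))) (q (snd (t, x)))) 1 =
        (\<lambda>x. comb (fst (t, x)) (p (snd (t, x))) (q (snd (t, x)))) 0"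
    using p1 q1 by simp
qed

lemma segment_pathin:
  fixes K :: "'a set set"
  assumes fK: "\<forall>\<sigma>\<in>K. finite \<sigma>" and sK: "\<sigma> \<in> K"
    and a: "\<alpha> \<in> closed_simplex \<sigma>" and b: "\<beta> \<in> closed_simplex \<sigma>"
  shows "pathin (realization K) (\<lambda>t. comb t \<alpha> \<beta>)"
  unfolding pathin_def
proof (rule continuous_map_into_realization[OF _ _ fK])
  show "continuous_map (top_of_set {0..1}) euclidean (\<lambda>t. comb t \<alpha> \<beta>)"
    by (simp only: continuous_map_iff_continuous) (rule continuous_comb[OF continuous_on_const continuous_on_const continuous_on_id])
  show "finite \<sigma>" using fK sK by blast
  fix x assume "x \<in> topspace (top_of_set {0..1::real})"
  then have "comb x \<alpha> \<beta> \<in> closed_simplex \<sigma>" using comb_in_simplex[OF a b] by simp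
  then show "\<exists>\<sigma>'\<in>K. \<sigma>' \<subseteq> \<sigma> \<and> comb x \<alpha> \<beta> \<in> closed_simplex \<sigma>'"
    using sK by blast
qed

definition hat :: "nat \<Rightarrow> nat \<Rightarrow> real \<Rightarrow> real" where
  "hat M j t = max 0 (1 - \<bar>real M * t - real j\<bar>)"

definition PL :: "nat \<Rightarrow> (nat \<Rightarrow> 'a) \<Rightarrow> real \<Rightarrow> 'a \<Rightarrow> real" where
  "PL M c t = (\<lambda>x. \<Sum>j\<le>M. hat M j t * vtx (c j) x)"

lemma PL_cont: "continuous_on S (PL M c)"
  unfolding PL_def
proof (rule continuous_on_coordinatewise_then_product)
  fix x
  show "continuous_on S (\<lambda>t. \<Sum>j\<le>M. hat M j t * vtx (c j) x)"
    unfolding hat_def by (intro continuous_intros)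
qed

lemma PL_start: "PL M c 0 = vtx (c 0)"
proof
  fix x
  have "hat M j 0 = (if j = 0 then 1 else 0)" for j
    unfolding hat_def by auto
  then have "(\<Sum>j\<le>M. hat M j 0 * vtx (c j) x) = (\<Sum>j\<le>M. if j = 0 then vtx (c j) x else 0)"
    by (intro sum.cong) auto
  then show "PL M c 0 x = vtx (c 0) x"
    unfolding PL_def by simp
qed

lemma PL_end: "PL M c 1 = vtx (c M)"
proof
  fix x
  have "hat M j 1 = (if j = M then 1 else 0)" if "j \<le> M" for j
  proof (cases "j = M")
    case False
    then have "real j + 1 \<le> real M" using that by simp
    then show ?thesis using False unfolding hat_def by auto
  qed (simp add: hat_def)
  then have "(\<Sum>j\<le>M. hat M j 1 * vtx (c j) x) = (\<Sum>j\<le>M. if j = M then vtx (c j) x else 0)"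
    by (intro sum.cong) auto
  then show "PL M c 1 x = vtx (c M) x"
    unfolding PL_def by simp
qed

lemma slot_u:
  assumes "m < M" "real m / real M \<le> t" "t \<le> (real m + 1) / real M"
  shows "0 \<le> real M * t - real m" "real M * t - real m \<le> 1"
proof -
  have M: "0 < real M" using assms by simp
  show "0 \<le> real M * t - real m" using assms(2) M by (simp add: divide_le_eq mult.commute)
  show "real M * t - real m \<le> 1" using assms(3) M by (simp add: le_divide_eq mult.commute)
qed

lemma PL_slot:
  assumes "m < M" "real m / real M \<le> t" "t \<le> (real m + 1) / real M"
  shows "PL M c t = comb (real M * t - real m) (vtx (c m)) (vtx (c (Suc m)))"
proof
  fix x
  define u where "u = real M * t - real m"
  have u: "0 \<le> u" "u \<le> 1" using slot_u[OF assms] unfolding u_def by auto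
  have hj: "hat M j t = (if j = m then 1 - u else 0) + (if j = Suc m then u else 0)" for j
  proof -
    have e: "real M * t - real j = u + real m - real j" unfolding u_def by simp
    consider "j < m" | "j = m" | "j = Suc m" | "Suc m < j" by linarith
    then show ?thesis
    proof cases
      case 1
      then have "real j + 1 \<le> real m" by simp
      then show ?thesis unfolding hat_def e using u 1 by auto
    next
      case 2
      then show ?thesis unfolding hat_def e using u by auto
    next
      case 3
      then show ?thesis unfolding hat_def e using u by auto
    next
      case 4
      then have "real m + 2 \<le> real j" by simp
      then show ?thesis unfolding hat_def e using u 4 by auto
    qed
  qed
  have "PL M c t x = (\<Sum>j\<le>M. (if j = m then (1 - u) * vtx (c j) x else 0) + (if j = Suc m then u * vtx (c j) x else 0))"
    unfolding PL_def hj by (intro sum.cong) auto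
  also have "\<dots> = (1 - u) * vtx (c m) x + u * vtx (c (Suc m)) x"
    using assms(1) by (simp add: sum.distrib)
  finally show "PL M c t x = comb (real M * t - real m) (vtx (c m)) (vtx (c (Suc m))) x"
    unfolding comb_def u_def by simp
qed

lemma PL_in_simplex:
  assumes "m < M" "real m / real M \<le> t" "t \<le> (real m + 1) / real M"
    and "finite \<tau>" "c m \<in> \<tau>" "c (Suc m) \<in> \<tau>"
  shows "PL M c t \<in> closed_simplex \<tau>"
  unfolding PL_slot[OF assms(1-3)]
  by (rule comb_in_simplex[OF vtx_in_simplex vtx_in_simplex slot_u[OF assms(1-3)]]) (use assms in auto)

lemma slot_exists:
  assumes "0 < M" "0 \<le> t" "t \<le> 1"
  shows "\<exists>m<M. real m / real M \<le> t \<and> t \<le> (real m + 1) / real M"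
proof -
  have M: "0 < real M" using assms by simp
  define k where "k = nat \<lfloor>t * real M\<rfloor>"
  have k1: "real k \<le> t * real M" unfolding k_def using assms by (simp add: of_nat_nat)
  have k2: "t * real M < real k + 1" unfolding k_def using assms
    by (metis add.commute floor_correct mult_nonneg_nonneg of_int_of_nat_eq of_nat_0_le_iff of_nat_nat order_less_imp_le real_of_int_floor_add_one_gt zero_le_floor)
  show ?thesis
  proof (cases "k < M")
    case True
    then show ?thesis using k1 k2 M
      by (intro exI[of _ k]) (auto simp: divide_le_eq le_divide_eq)
  next
    case False
    then have "real M \<le> t * real M" using k1 by linarith
    then have "t = 1" using assms M by (simp add: mult_le_cancel_right2)
    then show ?thesis using assms M
      by (intro exI[of _ "M - 1"]) (auto simp: of_nat_diff divide_le_eq le_divide_eq)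
  qed
qed

lemma PL_homotopic:
  fixes K :: "'a set set"
  assumes fK: "\<forall>\<sigma>\<in>K. finite \<sigma>" and M: "0 < M" and a: "a M = a 0" and b: "b M = b 0"
    and S: "\<And>m. m < M \<Longrightarrow> {a m, a (Suc m), b m, b (Suc m)} \<in> K"
  shows "homotopic_with (\<lambda>r. r 1 = r 0) (top_of_set {0..1}) (realization K) (PL M a) (PL M b)"
proof (rule SL_homotopic[OF fK PL_cont PL_cont _ _ _])
  show "PL M a 1 = PL M a 0" using a by (simp add: PL_start PL_end)
  show "PL M b 1 = PL M b 0" using b by (simp add: PL_start PL_end)
  show "finite (a ` {..M} \<union> b ` {..M})" by simp
  fix t :: real assume "t \<in> {0..1}"
  then obtain m where m: "m < M" "real m / real M \<le> t" "t \<le> (real m + 1) / real M"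
    using slot_exists[OF M] by auto
  let ?\<sigma> = "{a m, a (Suc m), b m, b (Suc m)}"
  have "?\<sigma> \<in> K" using S[OF m(1)] .
  moreover have "?\<sigma> \<subseteq> a ` {..M} \<union> b ` {..M}" using m(1) by auto
  moreover have "PL M a t \<in> closed_simplex ?\<sigma>" by (rule PL_in_simplex[OF m]) auto
  moreover have "PL M b t \<in> closed_simplex ?\<sigma>" by (rule PL_in_simplex[OF m]) auto
  ultimately show "\<exists>\<sigma>\<in>K. \<sigma> \<subseteq> a ` {..M} \<union> b ` {..M} \<and> PL M a t \<in> closed_simplex \<sigma> \<and> PL M b t \<in> closed_simplex \<sigma>"
    by blast
qed

definition good_approx :: "(real \<Rightarrow> 'a \<Rightarrow> real) \<Rightarrow> nat \<Rightarrow> (nat \<Rightarrow> 'a) \<Rightarrow> bool" where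
  "good_approx p M c \<longleftrightarrow> 0 < M \<and> c M = c 0 \<and>
     (\<forall>m<M. \<forall>t. real m / real M \<le> t \<and> t \<le> (real m + 1) / real M \<longrightarrow> 0 < p t (c m) \<and> 0 < p t (c (Suc m)))"

lemma approx_loop:
  fixes K :: "'a set set"
  assumes pp: "pathin (realization K) p" and p1: "p 1 = p 0"
  shows "\<exists>M c. good_approx p M c"
proof -
  have cp: "continuous_on {0..1} p"
    using continuous_map_from_realization[of "top_of_set {0..1}" K p] pp unfolding pathin_def by simp
  have top: "p t \<in> realization_carrier K" if "t \<in> {0..1}" for t
    using pp that unfolding pathin_def continuous_map_def topspace_realization by auto
  have pos: "\<exists>v. 0 < p t v" if "t \<in> {0..1}" for t
    using top[OF that] simplex_pos unfolding realization_carrier_def by blast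
  have ex: "\<forall>v. \<exists>A. open A \<and> A \<inter> {0..1} = (\<lambda>t. p t v) -` {0<..} \<inter> {0..1}"
  proof
    fix v
    have "continuous_on {0..1} (\<lambda>t. p t v)" by (rule continuous_on_product_then_coordinatewise[OF cp])
    then show "\<exists>A. open A \<and> A \<inter> {0..1} = (\<lambda>t. p t v) -` {0<..} \<inter> {0..1}"
      unfolding continuous_on_open_invariant using open_greaterThan by blast
  qed
  obtain U where UU: "\<forall>v. open (U v) \<and> U v \<inter> {0..1} = (\<lambda>t. p t v) -` {0<..} \<inter> {0..1}"
    using choice[OF ex] by blast
  then have U: "\<And>v. open (U v)" "\<And>v. U v \<inter> {0..1} = (\<lambda>t. p t v) -` {0<..} \<inter> {0..1}"
    by auto
  have Umem: "0 < p t v" if "t \<in> U v" "t \<in> {0..1}" for t v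
    using U(2)[of v] that by blast
  have cover: "{0..1} \<subseteq> \<Union>(range U)"
  proof
    fix t :: real assume t: "t \<in> {0..1}"
    then obtain v where "0 < p t v" using pos by blast
    then have "t \<in> U v" using U(2)[of v] t by blast
    then show "t \<in> \<Union>(range U)" by blast
  qed
  obtain \<delta> where \<delta>: "0 < \<delta>" "\<And>T. T \<subseteq> {0..1} \<Longrightarrow> diameter T < \<delta> \<Longrightarrow> \<exists>B\<in>range U. T \<subseteq> B"
    by (rule Lebesgue_number_lemma[OF compact_Icc _ cover]) (use U(1) in auto)
  obtain v0 where v0: "0 < p 0 v0" using pos[of 0] by auto
  have "0 \<in> U v0" using U(2)[of v0] v0 by auto
  then obtain e0 where e0: "0 < e0" "ball 0 e0 \<subseteq> U v0" using U(1) openE by metis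
  have "1 \<in> U v0" using U(2)[of v0] v0 p1 by auto
  then obtain e1 where e1: "0 < e1" "ball 1 e1 \<subseteq> U v0" using U(1) openE by metis
  define e where "e = min \<delta> (min e0 e1)"
  have e: "0 < e" "e \<le> \<delta>" "e \<le> e0" "e \<le> e1" using \<delta> e0 e1 unfolding e_def by auto
  define M where "M = nat \<lceil>2 / e\<rceil> + 1"
  have M0: "0 < M" unfolding M_def by simp
  have "2 / e \<le> real (nat \<lceil>2 / e\<rceil>)" by (rule real_nat_ceiling_ge)
  then have "2 / e < real M" unfolding M_def by simp
  then have "2 < e * real M" using e(1) by (simp add: divide_less_eq mult.commute)
  then have Mbig: "2 / real M < e" using M0 by (simp add: divide_less_eq mult.commute)
  define c where "c m = (if m = 0 \<or> m = M then v0 else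
      (SOME v. \<forall>t\<in>{0..1}. \<bar>t - real m / real M\<bar> \<le> 1 / real M \<longrightarrow> 0 < p t v))" for m
  have Q: "0 < p t (c m)" if m: "m \<le> M" and t: "t \<in> {0..1}" "\<bar>t - real m / real M\<bar> \<le> 1 / real M" for m t
  proof -
    have inv: "1 / real M < e" using Mbig M0 by (simp add: divide_less_eq)
    consider "m = 0" | "m = M" | "0 < m \<and> m < M" using m by linarith
    then show ?thesis
    proof cases
      case 1
      then have "t \<in> ball 0 e0" using t inv e by (auto simp: dist_real_def)
      then have "t \<in> U v0" using e0(2) by blast
      then show ?thesis using 1 Umem[of t v0] t unfolding c_def by auto
    next
      case 2
      then have "t \<in> ball 1 e1" using t inv e M0 by (auto simp: dist_real_def)
      then have "t \<in> U v0" using e1(2) by blast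
      then show ?thesis using 2 Umem[of t v0] t unfolding c_def by auto
    next
      case 3
      define T where "T = {t \<in> {0..1}. \<bar>t - real m / real M\<bar> \<le> 1 / real M}"
      have "T \<subseteq> {real m / real M - 1 / real M .. real m / real M + 1 / real M}"
        unfolding T_def by auto
      then have "diameter T \<le> diameter {real m / real M - 1 / real M .. real m / real M + 1 / real M}"
        by (rule diameter_subset) simp
      also have "\<dots> \<le> 2 / real M" by simp
      finally have "diameter T < \<delta>" using Mbig e by linarith
      moreover have "T \<subseteq> {0..1}" unfolding T_def by auto
      ultimately have "\<exists>B\<in>range U. T \<subseteq> B" using \<delta>(2) by blast
      then obtain v where "T \<subseteq> U v" by blast
      then have "\<forall>t\<in>{0..1}. \<bar>t - real m / real M\<bar> \<le> 1 / real M \<longrightarrow> 0 < p t v"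
        using Umem unfolding T_def by blast
      then have "\<forall>t\<in>{0..1}. \<bar>t - real m / real M\<bar> \<le> 1 / real M \<longrightarrow> 0 < p t (c m)"
        using 3 unfolding c_def by simp (rule someI_ex, blast)
      then show ?thesis using t by blast
    qed
  qed
  have "good_approx p M c"
    unfolding good_approx_def
  proof (intro conjI allI impI)
    show "0 < M" by (rule M0)
    show "c M = c 0" unfolding c_def by simp
    fix m t assume m: "m < M" and t: "real m / real M \<le> t \<and> t \<le> (real m + 1) / real M"
    have Mr: "0 < real M" using M0 by simp
    have z: "0 \<le> real m / real M" by simp
    have o: "(real m + 1) / real M \<le> 1" using m Mr by (simp add: divide_le_eq)
    have t01: "t \<in> {0..1}" using t z o by (simp only: atLeastAtMost_iff) linarith
    have d: "(real m + 1) / real M = real m / real M + 1 / real M" by (simp add: add_divide_distrib)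
    show "0 < p t (c m)"
      by (rule Q) (use m t01 t d in auto)
    have d2: "real (Suc m) / real M = real m / real M + 1 / real M" by (simp add: add_divide_distrib)
    have tb: "real m / real M \<le> t" "t \<le> real m / real M + 1 / real M" using t d by auto
    have "\<bar>t - real (Suc m) / real M\<bar> \<le> 1 / real M" unfolding d2 abs_le_iff using tb by linarith
    then show "0 < p t (c (Suc m))"
      using Q[of "Suc m" t] t01 m by simp
  qed
  then show ?thesis by blast
qed

definition md :: "int ^ 'n \<Rightarrow> int ^ 'n \<Rightarrow> int" where
  "md x y = (\<Sum>i\<in>UNIV. \<bar>x $ i - y $ i\<bar>)"

lemma manhattan_md: "manhattan x y = real_of_int (md x y)"
  unfolding manhattan_def md_def by simp

lemma md_sym: "md x y = md y x"
  unfolding md_def by (simp add: abs_minus_commute)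

lemma md_self [simp]: "md x x = 0"
  unfolding md_def by simp

lemma md_nonneg: "0 \<le> md x y"
  unfolding md_def by (simp add: sum_nonneg)

lemma md_tri: "md x z \<le> md x y + md y z"
proof -
  have "md x z \<le> (\<Sum>i\<in>UNIV. \<bar>x $ i - y $ i\<bar> + \<bar>y $ i - z $ i\<bar>)"
    unfolding md_def by (intro sum_mono) arith
  then show ?thesis unfolding md_def by (simp add: sum.distrib)
qed

lemma md_coord: "\<bar>x $ i - y $ i\<bar> \<le> md x y"
  unfolding md_def by (rule member_le_sum) auto

lemma md_zero: "md x y = 0 \<Longrightarrow> x = y"
proof -
  assume "md x y = 0"
  then have "\<bar>x $ i - y $ i\<bar> \<le> 0" for i using md_coord[of x i y] by simp
  then show "x = y" by (simp add: vec_eq_iff)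
qed

lemma VR_mem: "\<sigma> \<in> VR_complex manhattan UNIV r \<longleftrightarrow>
   finite \<sigma> \<and> \<sigma> \<noteq> {} \<and> (\<forall>x\<in>\<sigma>. \<forall>y\<in>\<sigma>. real_of_int (md x y) \<le> r)"
  unfolding VR_complex_def manhattan_md by auto

lemma VR_fin: "\<forall>\<sigma>\<in>VR_complex (manhattan :: int^'n \<Rightarrow> _) UNIV r. finite \<sigma>"
  unfolding VR_complex_def by auto

lemma ball_finite: "finite {y::int^'n. real_of_int (md x y) \<le> r}"
proof -
  define R where "R = \<lceil>r\<rceil>"
  define A where "A i = {x $ i - R .. x $ i + R}" for i
  have "{y::int^'n. real_of_int (md x y) \<le> r} \<subseteq> vec_lambda ` (Pi UNIV A)"
  proof
    fix y :: "int^'n" assume "y \<in> {y. real_of_int (md x y) \<le> r}"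
    then have "real_of_int (md x y) \<le> r" by simp
    then have "md x y \<le> R" unfolding R_def by linarith
    then have h: "\<bar>x $ i - y $ i\<bar> \<le> R" for i using md_coord[of x i y] by simp
    have "y $ i \<in> A i" for i using h[of i] unfolding A_def by (auto simp: abs_le_iff)
    then have "(\<lambda>i. y $ i) \<in> Pi UNIV A" by auto
    then show "y \<in> vec_lambda ` (Pi UNIV A)" by (intro image_eqI[of _ _ "\<lambda>i. y $ i"]) auto
  qed
  moreover have "finite (Pi UNIV A)"
    using finite_PiE[of UNIV A] unfolding PiE_UNIV_domain A_def by simp
  ultimately show ?thesis by (meson finite_imageI finite_subset)
qed

definition stepto :: "int ^ 'n \<Rightarrow> int ^ 'n \<Rightarrow> int ^ 'n" where
  "stepto b u = (if u = b then u else
     (\<chi> i. if i = (SOME k. u $ k \<noteq> b $ k) then u $ i + sgn (b $ i - u $ i) else u $ i))"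

definition walk :: "int ^ 'n \<Rightarrow> int ^ 'n \<Rightarrow> nat \<Rightarrow> int ^ 'n" where
  "walk a b i = (stepto b ^^ i) a"

definition between :: "int ^ 'n \<Rightarrow> int ^ 'n \<Rightarrow> int ^ 'n \<Rightarrow> bool" where
  "between a b u \<longleftrightarrow> (\<forall>i. \<bar>a $ i - u $ i\<bar> + \<bar>u $ i - b $ i\<bar> = \<bar>a $ i - b $ i\<bar>)"

lemma walk_0 [simp]: "walk a b 0 = a" unfolding walk_def by simp
lemma walk_Suc: "walk a b (Suc i) = stepto b (walk a b i)" unfolding walk_def by simp

lemma int_step_between:
  fixes a u b :: int
  assumes "\<bar>a - u\<bar> + \<bar>u - b\<bar> = \<bar>a - b\<bar>" "u \<noteq> b"
  shows "\<bar>a - (u + sgn (b - u))\<bar> + \<bar>(u + sgn (b - u)) - b\<bar> = \<bar>a - b\<bar>"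
proof (cases "u < b")
  case True
  then have s: "sgn (b - u) = 1" by simp
  show ?thesis unfolding s using assms True by arith
next
  case False
  then have s: "sgn (b - u) = -1" using assms(2) by simp
  show ?thesis unfolding s using assms False by arith
qed

lemma stepto_props:
  fixes u b :: "int ^ 'n"
  assumes "u \<noteq> b"
  shows "md (stepto b u) b = md u b - 1" "md u (stepto b u) = 1"
    "\<And>a. between a b u \<Longrightarrow> between a b (stepto b u)"
proof -
  define k where "k = (SOME k. u $ k \<noteq> b $ k)"
  have k: "u $ k \<noteq> b $ k" unfolding k_def using assms by (metis (mono_tags) someI_ex vec_eq_iff)
  define w where "w = (\<chi> i. if i = k then u $ i + sgn (b $ i - u $ i) else u $ i)"
  have sw: "stepto b u = w" unfolding stepto_def w_def k_def using assms by simp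
  have wk: "w $ k = u $ k + sgn (b $ k - u $ k)" unfolding w_def by simp
  have wi: "i \<noteq> k \<Longrightarrow> w $ i = u $ i" for i unfolding w_def by simp
  have e1: "\<bar>w $ k - b $ k\<bar> = \<bar>u $ k - b $ k\<bar> - 1" using k unfolding wk by (auto simp: sgn_if)
  have e2: "\<bar>u $ k - w $ k\<bar> = 1" using k unfolding wk by (auto simp: sgn_if)
  have split: "(\<Sum>i\<in>UNIV. f i) = f k + (\<Sum>i\<in>UNIV - {k}. f i)" for f :: "'n \<Rightarrow> int"
    by (simp add: sum.remove)
  show "md (stepto b u) b = md u b - 1"
    unfolding sw md_def split[of "\<lambda>i. \<bar>w $ i - b $ i\<bar>"] split[of "\<lambda>i. \<bar>u $ i - b $ i\<bar>"] e1
    using wi by simp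
  show "md u (stepto b u) = 1"
    unfolding sw md_def split[of "\<lambda>i. \<bar>u $ i - w $ i\<bar>"] e2 using wi by simp
  fix a assume "between a b u"
  then have bu: "\<bar>a $ i - u $ i\<bar> + \<bar>u $ i - b $ i\<bar> = \<bar>a $ i - b $ i\<bar>" for i
    unfolding between_def by blast
  show "between a b (stepto b u)"
    unfolding between_def sw
  proof
    fix i show "\<bar>a $ i - w $ i\<bar> + \<bar>w $ i - b $ i\<bar> = \<bar>a $ i - b $ i\<bar>"
    proof (cases "i = k")
      case True
      show ?thesis unfolding True wk by (rule int_step_between[OF bu k])
    next
      case False
      then show ?thesis using bu[of i] wi by simp
    qed
  qed
qed

lemma stepto_same [simp]: "stepto b b = b" unfolding stepto_def by simp

lemma between_refl: "between a b a" "between a b b"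
  unfolding between_def by auto

lemma walk_between: "between a b (walk a b i)"
proof (induction i)
  case 0 then show ?case by (simp add: between_refl)
next
  case (Suc i)
  then show ?case unfolding walk_Suc
    by (cases "walk a b i = b") (auto intro: stepto_props(3))
qed

lemma walk_md: "md (walk a b i) b = max 0 (md a b - int i)"
proof (induction i)
  case 0 then show ?case using md_nonneg[of a b] by simp
next
  case (Suc i)
  show ?case
  proof (cases "walk a b i = b")
    case True
    then show ?thesis using Suc unfolding walk_Suc by simp
  next
    case False
    have "md (walk a b i) b \<noteq> 0" using False md_zero by blast
    then show ?thesis using Suc stepto_props(1)[OF False] unfolding walk_Suc by simp
  qed
qed

lemma walk_end: "md a b \<le> int i \<Longrightarrow> walk a b i = b"
  using walk_md[of a b i] md_zero by fastforce

lemma walk_unit: "md (walk a b i) (walk a b (Suc i)) \<le> 1"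
  unfolding walk_Suc by (cases "walk a b i = b") (auto simp: stepto_props(2))

lemma between_md: "between a b u \<Longrightarrow> between a b v \<Longrightarrow> md u v \<le> md a b"
  unfolding between_def md_def
proof -
  assume u: "\<forall>i. \<bar>a $ i - u $ i\<bar> + \<bar>u $ i - b $ i\<bar> = \<bar>a $ i - b $ i\<bar>"
    and v: "\<forall>i. \<bar>a $ i - v $ i\<bar> + \<bar>v $ i - b $ i\<bar> = \<bar>a $ i - b $ i\<bar>"
  show "(\<Sum>i\<in>UNIV. \<bar>u $ i - v $ i\<bar>) \<le> (\<Sum>i\<in>UNIV. \<bar>a $ i - b $ i\<bar>)"
  proof (rule sum_mono)
    fix i
    have "\<bar>a $ i - u $ i\<bar> + \<bar>u $ i - b $ i\<bar> = \<bar>a $ i - b $ i\<bar>"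
      "\<bar>a $ i - v $ i\<bar> + \<bar>v $ i - b $ i\<bar> = \<bar>a $ i - b $ i\<bar>" using u v by auto
    then show "\<bar>u $ i - v $ i\<bar> \<le> \<bar>a $ i - b $ i\<bar>" by arith
  qed
qed

abbreviation VRK :: "real \<Rightarrow> (int ^ 'n) set set" where
  "VRK r \<equiv> VR_complex manhattan UNIV r"

lemma pathin_cont:
  fixes K :: "'a set set"
  assumes "pathin (realization K) p"
  shows "continuous_on {0..1} p" "\<And>t. t \<in> {0..1} \<Longrightarrow> p t \<in> realization_carrier K"
proof -
  show "continuous_on {0..1} p"
    using continuous_map_from_realization[of "top_of_set {0..1}" K p] assms unfolding pathin_def by simp
  show "\<And>t. t \<in> {0..1} \<Longrightarrow> p t \<in> realization_carrier K"
    using assms unfolding pathin_def continuous_map_def topspace_realization by auto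
qed

lemma carrier_VR:
  assumes "\<alpha> \<in> realization_carrier (VRK r)" "0 < \<alpha> v"
  shows "\<exists>\<sigma>. \<sigma> \<in> VRK r \<and> \<alpha> \<in> closed_simplex \<sigma> \<and> v \<in> \<sigma>"
proof -
  obtain \<sigma> where s: "\<sigma> \<in> VRK r" "\<alpha> \<in> closed_simplex \<sigma>"
    using assms(1) unfolding realization_carrier_def by (meson UN_E)
  have "v \<in> \<sigma>" by (rule simplex_supp[OF s(2) assms(2)])
  then show ?thesis using s by blast
qed

lemma p_to_PL:
  fixes p :: "real \<Rightarrow> int ^ 'n \<Rightarrow> real"
  assumes pp: "pathin (realization (VRK r)) p" and p1: "p 1 = p 0" and g: "good_approx p M c"
  shows "homotopic_with (\<lambda>q. q 1 = q 0) (top_of_set {0..1}) (realization (VRK r)) p (PL M c)"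
proof (rule SL_homotopic[where B = "\<Union>m\<le>M. {y. real_of_int (md (c m) y) \<le> r}", OF VR_fin pathin_cont(1)[OF pp] PL_cont p1])
  have M: "0 < M" and cM: "c M = c 0" and gg: "\<And>m t. m < M \<Longrightarrow> real m / real M \<le> t \<Longrightarrow> t \<le> (real m + 1) / real M \<Longrightarrow> 0 < p t (c m) \<and> 0 < p t (c (Suc m))"
    using g unfolding good_approx_def by auto
  show "PL M c 1 = PL M c 0" using cM by (simp add: PL_start PL_end)
  show "finite (\<Union>m\<le>M. {y. real_of_int (md (c m) y) \<le> r})" by (simp add: ball_finite)
  fix t :: real assume t: "t \<in> {0..1}"
  then obtain m where m: "m < M" "real m / real M \<le> t" "t \<le> (real m + 1) / real M"
    using slot_exists[OF M] by auto
  have pos: "0 < p t (c m)" "0 < p t (c (Suc m))" using gg[OF m] by auto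
  obtain \<sigma> where \<sigma>: "\<sigma> \<in> VRK r" "p t \<in> closed_simplex \<sigma>" "c m \<in> \<sigma>"
    using carrier_VR[OF pathin_cont(2)[OF pp t] pos(1)] by blast
  have cs: "c (Suc m) \<in> \<sigma>" using simplex_supp[OF \<sigma>(2) pos(2)] .
  have fs: "finite \<sigma>" and dist: "\<forall>x\<in>\<sigma>. \<forall>y\<in>\<sigma>. real_of_int (md x y) \<le> r" using \<sigma>(1) VR_mem by auto
  have s1: "\<sigma> \<subseteq> {y. real_of_int (md (c m) y) \<le> r}" using dist \<sigma>(3) by blast
  have s2: "{y. real_of_int (md (c m) y) \<le> r} \<subseteq> (\<Union>m\<le>M. {y. real_of_int (md (c m) y) \<le> r})"
    by (rule UN_upper) (use m(1) in simp)
  have "\<sigma> \<subseteq> (\<Union>m\<le>M. {y. real_of_int (md (c m) y) \<le> r})" using s1 s2 by (rule subset_trans)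
  moreover have "PL M c t \<in> closed_simplex \<sigma>" by (rule PL_in_simplex[OF m fs \<sigma>(3) cs])
  ultimately show "\<exists>\<sigma>\<in>VRK r. \<sigma> \<subseteq> (\<Union>m\<le>M. {y. real_of_int (md (c m) y) \<le> r}) \<and> p t \<in> closed_simplex \<sigma> \<and> PL M c t \<in> closed_simplex \<sigma>"
    using \<sigma> by blast
qed

lemma good_step:
  fixes p :: "real \<Rightarrow> int ^ 'n \<Rightarrow> real"
  assumes pp: "pathin (realization (VRK r)) p" and g: "good_approx p M c" and m: "m < M"
  shows "real_of_int (md (c m) (c (Suc m))) \<le> r"
proof -
  have M: "0 < M" and gg: "\<And>m t. m < M \<Longrightarrow> real m / real M \<le> t \<Longrightarrow> t \<le> (real m + 1) / real M \<Longrightarrow> 0 < p t (c m) \<and> 0 < p t (c (Suc m))"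
    using g unfolding good_approx_def by auto
  define t where "t = real m / real M"
  have t01: "t \<in> {0..1}" using m unfolding t_def by (simp add: divide_le_eq)
  have "t \<le> (real m + 1) / real M" unfolding t_def using M by (simp add: divide_right_mono)
  then have pos: "0 < p t (c m)" "0 < p t (c (Suc m))" using gg[OF m] unfolding t_def by auto
  obtain \<sigma> where \<sigma>: "\<sigma> \<in> VRK r" "p t \<in> closed_simplex \<sigma>" "c m \<in> \<sigma>"
    using carrier_VR[OF pathin_cont(2)[OF pp t01] pos(1)] by blast
  have cs: "c (Suc m) \<in> \<sigma>" using simplex_supp[OF \<sigma>(2) pos(2)] .
  then show ?thesis using \<sigma> VR_mem by blast
qed

lemma pad_approx:
  assumes g: "good_approx p N c" and L: "0 < L"
  shows "good_approx p (N * L) (\<lambda>m. c (m div L))"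
  unfolding good_approx_def
proof (intro conjI allI impI)
  have N: "0 < N" and cN: "c N = c 0" and gg: "\<And>m t. m < N \<Longrightarrow> real m / real N \<le> t \<Longrightarrow> t \<le> (real m + 1) / real N \<Longrightarrow> 0 < p t (c m) \<and> 0 < p t (c (Suc m))"
    using g unfolding good_approx_def by auto
  show "0 < N * L" using N L by simp
  show "c (N * L div L) = c (0 div L)" using cN L by simp
  fix m t assume m: "m < N * L" and t: "real m / real (N * L) \<le> t \<and> t \<le> (real m + 1) / real (N * L)"
  define j where "j = m div L"
  have jN: "j < N" unfolding j_def using m L by (simp add: div_less_iff_less_mult)
  have jm: "j * L \<le> m" unfolding j_def by (simp add: div_times_less_eq_dividend)
  have e: "j * L + m mod L = m" unfolding j_def by (rule div_mult_mod_eq)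
  have "m mod L < L" using L by simp
  then have mj: "m + 1 \<le> (j + 1) * L" using e unfolding add_mult_distrib by linarith
  have NL: "0 < real N * real L" using N L by simp
  have a1: "real (j * L) / real (N * L) \<le> real m / real (N * L)"
    using divide_right_mono[of "real (j*L)" "real m" "real (N*L)"] jm by (simp only: of_nat_le_iff of_nat_0_le_iff)
  have a2: "real j / real N = real (j * L) / real (N * L)" using L by simp
  have t1: "real j / real N \<le> t" using t a1 a2 by linarith
  have b1: "real (m + 1) / real (N * L) \<le> real ((j + 1) * L) / real (N * L)"
    using divide_right_mono[of "real (m + 1)" "real ((j + 1) * L)" "real (N*L)"] mj by (simp only: of_nat_le_iff of_nat_0_le_iff)
  have b2: "real ((j + 1) * L) / real (N * L) = (real j + 1) / real N" using L N by (simp add: field_simps)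
  have b3: "real (m + 1) = real m + 1" by simp
  have t2: "t \<le> (real j + 1) / real N" using t b1 b2 b3 by (simp only:) linarith
  have pj: "0 < p t (c j)" "0 < p t (c (Suc j))" using gg[OF jN t1 t2] by auto
  show "0 < p t (c (m div L))" using pj unfolding j_def by simp
  have "Suc m div L = j \<or> Suc m div L = Suc j" unfolding j_def by (simp add: div_Suc)
  then show "0 < p t (c (Suc m div L))" using pj by auto
qed

definition ywalk :: "nat \<Rightarrow> (nat \<Rightarrow> int ^ 'n) \<Rightarrow> nat \<Rightarrow> int ^ 'n" where
  "ywalk L c m = walk (c (m div L)) (c (Suc (m div L))) (m mod L)"

lemma ywalk_Suc:
  assumes L: "0 < L" and md: "md (c (m div L)) (c (Suc (m div L))) \<le> int L"
  shows "ywalk L c (Suc m) = walk (c (m div L)) (c (Suc (m div L))) (Suc (m mod L))"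
proof (cases "Suc (m mod L) = L")
  case True
  then have "Suc m mod L = 0" "Suc m div L = Suc (m div L)" by (simp_all add: mod_Suc div_Suc)
  then have "ywalk L c (Suc m) = c (Suc (m div L))" unfolding ywalk_def by simp
  also have "\<dots> = walk (c (m div L)) (c (Suc (m div L))) (Suc (m mod L))"
    using True md by (intro walk_end[symmetric]) simp
  finally show ?thesis .
next
  case False
  then have "Suc m mod L = Suc (m mod L)" "Suc m div L = m div L" by (simp_all add: mod_Suc div_Suc)
  then show ?thesis unfolding ywalk_def by simp
qed

lemma stage2:
  fixes c :: "nat \<Rightarrow> int ^ 'n"
  assumes N: "0 < N" and L: "0 < L" and cN: "c N = c 0"
    and st: "\<And>m. m < N \<Longrightarrow> real_of_int (md (c m) (c (Suc m))) \<le> r"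
    and stL: "\<And>m. m < N \<Longrightarrow> md (c m) (c (Suc m)) \<le> int L"
  shows "homotopic_with (\<lambda>q. q 1 = q 0) (top_of_set {0..1}) (realization (VRK r))
           (PL (N * L) (\<lambda>m. c (m div L))) (PL (N * L) (ywalk L c))"
    "ywalk L c (N * L) = ywalk L c 0"
    "\<And>m. m < N * L \<Longrightarrow> md (ywalk L c m) (ywalk L c (Suc m)) \<le> 1"
proof -
  show y0: "ywalk L c (N * L) = ywalk L c 0" unfolding ywalk_def using L cN by simp
  have jN: "m div L < N" if "m < N * L" for m using that L by (simp add: div_less_iff_less_mult)
  show "md (ywalk L c m) (ywalk L c (Suc m)) \<le> 1" if m: "m < N * L" for m
    unfolding ywalk_Suc[OF L stL[OF jN[OF m]]] unfolding ywalk_def by (rule walk_unit)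
  show "homotopic_with (\<lambda>q. q 1 = q 0) (top_of_set {0..1}) (realization (VRK r))
           (PL (N * L) (\<lambda>m. c (m div L))) (PL (N * L) (ywalk L c))"
  proof (rule PL_homotopic[OF VR_fin])
    show "0 < N * L" using N L by simp
    show "c (N * L div L) = c (0 div L)" using cN L by simp
    show "ywalk L c (N * L) = ywalk L c 0" by (rule y0)
    fix m assume m: "m < N * L"
    define j where "j = m div L"
    let ?a = "c j" and ?b = "c (Suc j)"
    have ys: "ywalk L c (Suc m) = walk ?a ?b (Suc (m mod L))"
      unfolding j_def by (rule ywalk_Suc[OF L stL[OF jN[OF m]]])
    have bt: "between ?a ?b u" if "u \<in> {c (m div L), c (Suc m div L), ywalk L c m, ywalk L c (Suc m)}" for u
    proof -
      have "Suc m div L = j \<or> Suc m div L = Suc j" unfolding j_def by (simp add: div_Suc)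
      then show ?thesis using that ys walk_between[of ?a ?b] between_refl[of ?a ?b]
        unfolding ywalk_def j_def by auto
    qed
    have "real_of_int (md u v) \<le> r" if "u \<in> {c (m div L), c (Suc m div L), ywalk L c m, ywalk L c (Suc m)}"
      "v \<in> {c (m div L), c (Suc m div L), ywalk L c m, ywalk L c (Suc m)}" for u v
    proof -
      have "md u v \<le> md ?a ?b" by (rule between_md[OF bt[OF that(1)] bt[OF that(2)]])
      moreover have "real_of_int (md ?a ?b) \<le> r" using st[OF jN[OF m]] unfolding j_def .
      ultimately show ?thesis by linarith
    qed
    then show "{c (m div L), c (Suc m div L), ywalk L c m, ywalk L c (Suc m)} \<in> VRK r"
      unfolding VR_mem by auto
  qed
qed

definition shrink :: "'n \<Rightarrow> int ^ 'n \<Rightarrow> int ^ 'n" where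
  "shrink i u = (\<chi> k. if k = i then u $ k - sgn (u $ k) else u $ k)"

lemma int_shrink_lip:
  fixes a b :: int
  shows "\<bar>(a - sgn a) - (b - sgn b)\<bar> \<le> \<bar>a - b\<bar>"
proof -
  consider "a < 0" | "a = 0" | "a > 0" by linarith
  then show ?thesis
  proof cases
    case 1
    then have sa: "sgn a = -1" by simp
    consider "b < 0" | "b = 0" | "b > 0" by linarith
    then show ?thesis
      by cases (simp_all only: sa sgn_neg sgn_pos sgn_0; use 1 in arith)+
  next
    case 2
    then have sa: "sgn a = 0" by simp
    consider "b < 0" | "b = 0" | "b > 0" by linarith
    then show ?thesis
      by cases (simp_all only: sa sgn_neg sgn_pos sgn_0; use 2 in arith)+
  next
    case 3
    then have sa: "sgn a = 1" by simp
    consider "b < 0" | "b = 0" | "b > 0" by linarith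
    then show ?thesis
      by cases (simp_all only: sa sgn_neg sgn_pos sgn_0; use 3 in arith)+
  qed
qed

lemma shrink_nth: "shrink i u $ k = (if k = i then u $ k - sgn (u $ k) else u $ k)"
  unfolding shrink_def by simp

lemma shrink_lip: "md (shrink i u) (shrink i v) \<le> md u v"
  unfolding md_def
proof (rule sum_mono)
  fix k
  show "\<bar>shrink i u $ k - shrink i v $ k\<bar> \<le> \<bar>u $ k - v $ k\<bar>"
    unfolding shrink_nth by (simp add: int_shrink_lip)
qed

lemma shrink_md1: "md u (shrink i u) \<le> 1"
proof -
  have "md u (shrink i u) = (\<Sum>k\<in>UNIV. if k = i then \<bar>sgn (u $ i)\<bar> else 0)"
    unfolding md_def shrink_nth by (intro sum.cong) auto
  also have "\<dots> = \<bar>sgn (u $ i)\<bar>" by simp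
  also have "\<dots> \<le> 1" by (simp add: abs_sgn_eq)
  finally show ?thesis .
qed

lemma shrink_abs_le: "\<bar>shrink i u $ k\<bar> \<le> \<bar>u $ k\<bar>"
  unfolding shrink_nth using int_shrink_lip[of "u $ k" 0] by (cases "k = i") simp_all

lemma shrink_abs_less: "u $ i \<noteq> 0 \<Longrightarrow> \<bar>shrink i u $ i\<bar> < \<bar>u $ i\<bar>"
  unfolding shrink_nth by (cases "u $ i > 0") (auto simp: sgn_if)

definition tot :: "nat \<Rightarrow> (nat \<Rightarrow> int ^ 'n) \<Rightarrow> int" where
  "tot M y = (\<Sum>m\<le>M. \<Sum>k\<in>UNIV. \<bar>y m $ k\<bar>)"

lemma zero_case:
  fixes y :: "nat \<Rightarrow> int ^ 'n"
  assumes r: "0 \<le> r" and M: "0 < M" and z: "\<forall>m\<le>M. y m = 0"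
  shows "homotopic_with (\<lambda>q. q 1 = q 0) (top_of_set {0..1}) (realization (VRK r)) (PL M y) (\<lambda>t. vtx 0)"
proof (rule SL_homotopic[where B = "{0}", OF VR_fin PL_cont continuous_on_const])
  show "PL M y 1 = PL M y 0" using z M by (simp add: PL_start PL_end)
  show "vtx 0 = vtx 0" ..
  show "finite {0::int^'n}" by simp
  fix t :: real assume t: "t \<in> {0..1}"
  then obtain m where m: "m < M" "real m / real M \<le> t" "t \<le> (real m + 1) / real M"
    using slot_exists[OF M] by auto
  have s: "{0::int^'n} \<in> VRK r" unfolding VR_mem using r by simp
  have "PL M y t \<in> closed_simplex {0}" by (rule PL_in_simplex[OF m]) (use z m in auto)
  moreover have "vtx 0 \<in> closed_simplex {0::int^'n}" by (rule vtx_in_simplex) auto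
  ultimately show "\<exists>\<sigma>\<in>VRK r. \<sigma> \<subseteq> {0} \<and> PL M y t \<in> closed_simplex \<sigma> \<and> vtx 0 \<in> closed_simplex \<sigma>"
    using s by blast
qed

lemma quad_md:
  assumes "md a b \<le> 1" "u \<in> {a, b, shrink i a, shrink i b}" "v \<in> {a, b, shrink i a, shrink i b}"
  shows "md u v \<le> 2"
proof -
  have ab: "md a b \<le> 1" "md b a \<le> 1" using assms(1) md_sym by metis+
  have sa: "md a (shrink i a) \<le> 1" "md (shrink i a) a \<le> 1" using shrink_md1 md_sym by metis+
  have sb: "md b (shrink i b) \<le> 1" "md (shrink i b) b \<le> 1" using shrink_md1 md_sym by metis+
  have ss: "md (shrink i a) (shrink i b) \<le> 1" "md (shrink i b) (shrink i a) \<le> 1"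
    using shrink_lip[of i a b] shrink_lip[of i b a] ab by auto
  have x1: "md a (shrink i b) \<le> 2" using md_tri[of a "shrink i b" b] ab sb by linarith
  have x2: "md (shrink i b) a \<le> 2" using x1 md_sym by metis
  have x3: "md b (shrink i a) \<le> 2" using md_tri[of b "shrink i a" a] ab sa by linarith
  have x4: "md (shrink i a) b \<le> 2" using x3 md_sym by metis
  show ?thesis using assms(2,3) ab sa sb ss x1 x2 x3 x4 by auto
qed

lemma tot_nonneg: "0 \<le> tot M y"
  unfolding tot_def by (intro sum_nonneg) auto

lemma shrink_step:
  fixes y :: "nat \<Rightarrow> int ^ 'n"
  assumes r: "2 \<le> r" and M: "0 < M" and nz: "\<not> (\<forall>m\<le>M. y m = 0)"
    and yM: "y M = y 0" and u: "\<forall>m<M. md (y m) (y (Suc m)) \<le> 1"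
  shows "\<exists>y'. nat (tot M y') < nat (tot M y) \<and> y' M = y' 0 \<and> (\<forall>m<M. md (y' m) (y' (Suc m)) \<le> 1) \<and>
     homotopic_with (\<lambda>q. q 1 = q 0) (top_of_set {0..1}) (realization (VRK r)) (PL M y) (PL M y')"
proof -
  obtain m0 where m0: "m0 \<le> M" "y m0 \<noteq> 0" using nz by blast
  then obtain i where i: "y m0 $ i \<noteq> 0" by (metis vec_eq_iff zero_index)
  define y' where "y' m = shrink i (y m)" for m
  have le: "(\<Sum>k\<in>UNIV. \<bar>y' m $ k\<bar>) \<le> (\<Sum>k\<in>UNIV. \<bar>y m $ k\<bar>)" for m
    unfolding y'_def by (intro sum_mono shrink_abs_le)
  have lt: "(\<Sum>k\<in>UNIV. \<bar>y' m0 $ k\<bar>) < (\<Sum>k\<in>UNIV. \<bar>y m0 $ k\<bar>)"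
    unfolding y'_def by (rule sum_strict_mono_ex1) (use shrink_abs_le shrink_abs_less[OF i] in auto)
  have "tot M y' < tot M y"
    unfolding tot_def by (rule sum_strict_mono_ex1) (use le lt m0 in auto)
  then have t: "nat (tot M y') < nat (tot M y)" using tot_nonneg[of M y'] by simp
  have yM': "y' M = y' 0" unfolding y'_def using yM by simp
  have u': "\<forall>m<M. md (y' m) (y' (Suc m)) \<le> 1"
    using u shrink_lip unfolding y'_def by (meson order_trans)
  have h: "homotopic_with (\<lambda>q. q 1 = q 0) (top_of_set {0..1}) (realization (VRK r)) (PL M y) (PL M y')"
  proof (rule PL_homotopic[OF VR_fin M yM yM'])
    fix m assume m: "m < M"
    have um: "md (y m) (y (Suc m)) \<le> 1" using u m by blast
    let ?S = "{y m, y (Suc m), shrink i (y m), shrink i (y (Suc m))}"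
    have rb: "real_of_int (md a b) \<le> r" if ab: "a \<in> ?S" "b \<in> ?S" for a b
    proof -
      have "md a b \<le> 2" by (rule quad_md[OF um ab])
      then have "real_of_int (md a b) \<le> 2" by simp
      then show ?thesis using r by linarith
    qed
    have "?S \<in> VRK r" unfolding VR_mem
    proof (intro conjI ballI)
      fix a b assume "a \<in> ?S" "b \<in> ?S"
      then show "real_of_int (md a b) \<le> r" by (rule rb)
    qed simp_all
    then show "{y m, y (Suc m), y' m, y' (Suc m)} \<in> VRK r" unfolding y'_def .
  qed
  show ?thesis using t yM' u' h by blast
qed

lemma unit_contract_aux:
  fixes r :: real
  assumes r: "2 \<le> r" and M: "0 < M"
  shows "\<forall>y :: nat \<Rightarrow> int ^ 'n. nat (tot M y) \<le> n \<longrightarrow> y M = y 0 \<longrightarrow> (\<forall>m<M. md (y m) (y (Suc m)) \<le> 1) \<longrightarrow>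
     homotopic_with (\<lambda>q. q 1 = q 0) (top_of_set {0..1}) (realization (VRK r)) (PL M y) (\<lambda>t. vtx 0)"
proof (induction n)
  case 0
  show ?case
  proof (intro allI impI)
    fix y :: "nat \<Rightarrow> int ^ 'n"
    assume a: "nat (tot M y) \<le> 0" "y M = y 0" "\<forall>m<M. md (y m) (y (Suc m)) \<le> 1"
    show "homotopic_with (\<lambda>q. q 1 = q 0) (top_of_set {0..1}) (realization (VRK r)) (PL M y) (\<lambda>t. vtx 0)"
    proof (cases "\<forall>m\<le>M. y m = 0")
      case True
      then show ?thesis using zero_case[of r M y] r M by simp
    next
      case False
      then show ?thesis using shrink_step[OF r M False a(2,3)] a(1) by auto
    qed
  qed
next
  case (Suc n)
  show ?case
  proof (intro allI impI)
    fix y :: "nat \<Rightarrow> int ^ 'n"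
    assume a: "nat (tot M y) \<le> Suc n" "y M = y 0" "\<forall>m<M. md (y m) (y (Suc m)) \<le> 1"
    show "homotopic_with (\<lambda>q. q 1 = q 0) (top_of_set {0..1}) (realization (VRK r)) (PL M y) (\<lambda>t. vtx 0)"
    proof (cases "\<forall>m\<le>M. y m = 0")
      case True
      then show ?thesis using zero_case[of r M y] r M by simp
    next
      case False
      then obtain y' where y': "nat (tot M y') < nat (tot M y)" "y' M = y' 0"
          "\<forall>m<M. md (y' m) (y' (Suc m)) \<le> 1"
          "homotopic_with (\<lambda>q. q 1 = q 0) (top_of_set {0..1}) (realization (VRK r)) (PL M y) (PL M y')"
        using shrink_step[OF r M False a(2,3)] by blast
      have "nat (tot M y') \<le> n" using y'(1) a(1) by linarith
      then have "homotopic_with (\<lambda>q. q 1 = q 0) (top_of_set {0..1}) (realization (VRK r)) (PL M y') (\<lambda>t. vtx 0)"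
        using Suc.IH y'(2,3) by blast
      then show ?thesis using homotopic_with_trans y'(4) by blast
    qed
  qed
qed

lemma unit_contract:
  fixes r :: real and y :: "nat \<Rightarrow> int ^ 'n"
  assumes r: "2 \<le> r" and M: "0 < M" and yM: "y M = y 0" and u: "\<forall>m<M. md (y m) (y (Suc m)) \<le> 1"
  shows "homotopic_with (\<lambda>q. q 1 = q 0) (top_of_set {0..1}) (realization (VRK r)) (PL M y) (\<lambda>t. vtx 0)"
  using unit_contract_aux[OF r M, of "nat (tot M y)"] yM u by blast

lemma const_loops:
  assumes g: "pathin X g"
  shows "homotopic_with (\<lambda>q. q 1 = q 0) (top_of_set {0..1}) X (\<lambda>t. g 0) (\<lambda>t. g 1)"
  unfolding homotopic_with_def
proof (intro exI conjI allI ballI)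
  show "continuous_map (prod_topology (top_of_set {0..1}) (top_of_set {0..1})) X (g \<circ> fst)"
    using continuous_map_compose[OF continuous_map_fst g[unfolded pathin_def]] .
qed simp_all

lemma vtx_carrier:
  assumes r: "0 \<le> r"
  shows "vtx (a :: int ^ 'n) \<in> topspace (realization (VRK r))"
proof -
  have "{a} \<in> VRK r" unfolding VR_mem using r by simp
  moreover have "vtx a \<in> closed_simplex {a}" by (rule vtx_in_simplex) auto
  ultimately show ?thesis unfolding topspace_realization realization_carrier_def by blast
qed

lemma edge_conn:
  fixes u w :: "int ^ 'n"
  assumes "real_of_int (md u w) \<le> r" "0 \<le> r"
  shows "path_component_of (realization (VRK r)) (vtx u) (vtx w)"
proof -
  have s: "{u, w} \<in> VRK r" unfolding VR_mem using assms md_sym[of u w] by auto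
  have "pathin (realization (VRK r)) (\<lambda>t. comb t (vtx u) (vtx w))"
    by (rule segment_pathin[OF VR_fin s]) (auto intro: vtx_in_simplex)
  then show ?thesis unfolding path_component_of_def by (intro exI[of _ "\<lambda>t. comb t (vtx u) (vtx w)"]) simp
qed

lemma vtx_conn:
  fixes a b :: "int ^ 'n"
  assumes r: "1 \<le> r"
  shows "path_component_of (realization (VRK r)) (vtx a) (vtx b)"
proof -
  have "path_component_of (realization (VRK r)) (vtx a) (vtx (walk a b i))" for i
  proof (induction i)
    case 0
    have "vtx (walk a b 0) \<in> topspace (realization (VRK r))" by (rule vtx_carrier) (use r in linarith)
    then show ?case by (simp only: walk_0 path_component_of_refl)
  next
    case (Suc i)
    have "real_of_int (md (walk a b i) (walk a b (Suc i))) \<le> 1" using walk_unit[of a b i] by simp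
    have "path_component_of (realization (VRK r)) (vtx (walk a b i)) (vtx (walk a b (Suc i)))"
      by (rule edge_conn) (use r \<open>real_of_int (md (walk a b i) (walk a b (Suc i))) \<le> 1\<close> in linarith)+
    then show ?case by (rule path_component_of_trans[OF Suc.IH])
  qed
  moreover have "walk a b (nat (md a b)) = b" by (rule walk_end) (simp add: md_nonneg)
  ultimately show ?thesis by metis
qed

lemma pt_conn:
  assumes r: "0 \<le> r" and a: "\<alpha> \<in> topspace (realization (VRK r))"
  shows "\<exists>v::int^'n. path_component_of (realization (VRK r)) \<alpha> (vtx v)"
proof -
  obtain \<sigma> where s: "\<sigma> \<in> VRK r" "\<alpha> \<in> closed_simplex \<sigma>"
    using a unfolding topspace_realization realization_carrier_def by (meson UN_E)
  obtain v where v: "v \<in> \<sigma>" using simplex_pos[OF s(2)] by blast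
  have "finite \<sigma>" using s(1) unfolding VR_mem by (elim conjE)
  then have "vtx v \<in> closed_simplex \<sigma>" using v by (rule vtx_in_simplex)
  then have "pathin (realization (VRK r)) (\<lambda>t. comb t \<alpha> (vtx v))"
    by (rule segment_pathin[OF VR_fin s])
  then have "path_component_of (realization (VRK r)) \<alpha> (vtx v)"
    unfolding path_component_of_def by (intro exI[of _ "\<lambda>t. comb t \<alpha> (vtx v)"]) simp
  then show ?thesis by blast
qed

lemma VR_path_connected:
  assumes r: "1 \<le> r"
  shows "path_connected_space (realization (VRK r :: (int ^ 'n) set set))"
  unfolding path_connected_space_iff_path_component
proof (intro ballI)
  fix \<alpha> \<beta> assume a: "\<alpha> \<in> topspace (realization (VRK r :: (int ^ 'n) set set))"
    and b: "\<beta> \<in> topspace (realization (VRK r :: (int ^ 'n) set set))"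
  obtain v :: "int^'n" where v: "path_component_of (realization (VRK r)) \<alpha> (vtx v)"
    using pt_conn[OF _ a] r by fastforce
  obtain w :: "int^'n" where w: "path_component_of (realization (VRK r)) \<beta> (vtx w)"
    using pt_conn[OF _ b] r by fastforce
  have "path_component_of (realization (VRK r)) (vtx v) (vtx w)" by (rule vtx_conn[OF r])
  then show "path_component_of (realization (VRK r)) \<alpha> \<beta>"
    using v w path_component_of_trans path_component_of_sym by metis
qed

theorem theorem4p14:
  fixes r :: real
  assumes "r \<ge> 2"
  shows "simply_connected_space
           (realization (VR_complex (manhattan :: int ^ 'n \<Rightarrow> int ^ 'n \<Rightarrow> real) UNIV r))"
  unfolding simply_connected_space_def
proof (intro conjI allI impI)
  have r: "2 \<le> r" using assms by simp
  show pc: "path_connected_space (realization (VRK r :: (int ^ 'n) set set))"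
    by (rule VR_path_connected) (use r in linarith)
  fix p :: "real \<Rightarrow> int ^ 'n \<Rightarrow> real"
  assume pp: "pathin (realization (VRK r)) p \<and> p 1 = p 0"
  then have pp1: "pathin (realization (VRK r)) p" and p1: "p 1 = p 0" by auto
  obtain N c where g: "good_approx p N c" using approx_loop[OF pp1 p1] by blast
  have N: "0 < N" and cN: "c N = c 0" using g unfolding good_approx_def by auto
  define L where "L = nat \<lceil>r\<rceil> + 1"
  have L: "0 < L" unfolding L_def by simp
  have st: "real_of_int (md (c m) (c (Suc m))) \<le> r" if "m < N" for m
    by (rule good_step[OF pp1 g that])
  have stL: "md (c m) (c (Suc m)) \<le> int L" if "m < N" for m
  proof -
    have "real_of_int (md (c m) (c (Suc m))) \<le> r" by (rule st[OF that])
    then have "md (c m) (c (Suc m)) \<le> \<lceil>r\<rceil>" by linarith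
    then show ?thesis unfolding L_def using r by linarith
  qed
  have h1: "homotopic_with (\<lambda>q. q 1 = q 0) (top_of_set {0..1}) (realization (VRK r)) p (PL (N * L) (\<lambda>m. c (m div L)))"
    by (rule p_to_PL[OF pp1 p1 pad_approx[OF g L]])
  note s2 = stage2[OF N L cN st stL]
  have h2: "homotopic_with (\<lambda>q. q 1 = q 0) (top_of_set {0..1}) (realization (VRK r)) (PL (N * L) (ywalk L c)) (\<lambda>t. vtx 0)"
    by (rule unit_contract[OF r _ s2(2)]) (use N L s2(3) in auto)
  have v0: "vtx 0 \<in> topspace (realization (VRK r :: (int ^ 'n) set set))" by (rule vtx_carrier) (use r in linarith)
  have p0: "p 0 \<in> topspace (realization (VRK r))"
    using pp1 unfolding pathin_def continuous_map_def by auto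
  have pc': "\<forall>x\<in>topspace (realization (VRK r :: (int ^ 'n) set set)). \<forall>y\<in>topspace (realization (VRK r)). path_component_of (realization (VRK r)) x y"
    using pc by (simp only: path_connected_space_iff_path_component)
  have "path_component_of (realization (VRK r)) (vtx 0) (p 0)"
    using pc' v0 p0 by blast
  then obtain g where gp: "pathin (realization (VRK r)) g" "g 0 = vtx 0" "g 1 = p 0"
    unfolding path_component_of_def by (elim exE conjE)
  have h3: "homotopic_with (\<lambda>q. q 1 = q 0) (top_of_set {0..1}) (realization (VRK r)) (\<lambda>t. vtx 0) (\<lambda>t. p 0)"
    using const_loops[OF gp(1)] gp(2,3) by simp
  show "homotopic_with (\<lambda>q. q 1 = q 0) (top_of_set {0..1}) (realization (VRK r)) p (\<lambda>t. p 0)"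
    by (rule homotopic_with_trans[OF h1 homotopic_with_trans[OF s2(1) homotopic_with_trans[OF h2 h3]]])
qed

end
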